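(* Assume the monotone likelihood ratio property: for all $\rho,\rho'\in\mathcal{R}$ with $\rho>\rho'$, $\frac{\Pr\{R=\rho\mid Y=1\}}{\Pr\{R=\rho\mid Y=0\}}\ge\frac{\Pr\{R=\rho'\mid Y=1\}}{\Pr\{R=\rho'\mid Y=0\}}$. Then for every $1\le m\le n$, the accuracy $$\theta(\epsilon)=\frac{1}{m}\sum_{i\in\mathcal{N}}\Pr\{J_{i,\epsilon}=1,\ Y_i=1\}$$ of the exponential mechanism $\mathscr{B}_\epsilon$ is increasing in $\epsilon\ge0$.
   Context: There are $n$ individuals indexed by $\mathcal{N}=\{1,\dots,n\}$. Individual $i$ is described by a random tuple $(X_i,A_i,Y_i)$, with features $X_i\in\mathcal{X}$, protected attribute $A_i\in\{0,1\}$ and qualification state $Y_i\in\{0,1\}$; the tuples are i.i.d. with a common distribution $\mathsf{F}$, and $(X,A,Y)$ is a generic tuple with this distribution. A fixed function $r:\mathcal{X}\to\mathcal{R}$ is given, with $\mathcal{R}\subset[0,1]$ finite; $R_i=r(X_i)$, $R=r(X)$. Let $\mathcal{S}$ be the family of all $m$-element subsets of $\mathcal{N}$. For $\epsilon\ge0$, the exponential mechanism $\mathscr{B}_\epsilon$, given realized scores $(r_1,\dots,r_n)$, selects $\mathcal{G}\in\mathcal{S}$ with probability $\exp(\epsilon\sum_{j\in\mathcal{G}}r_j/2)/\sum_{\mathcal{G}'\in\mathcal{S}}\exp(\epsilon\sum_{j\in\mathcal{G}'}r_j/2)$. $J_{i,\epsilon}$ is the indicator that individual $i$ belongs to the set selected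 by $\mathscr{B}_\epsilon$. *)

theory Defs
  imports "HOL-Probability.Probability"
begin

text \<open>Individuals are indexed by N = {1..n}. An individual's tuple (X,A,Y) is an element
of type 'x \<times> bool \<times> bool; the common distribution F is a probability measure on it.\<close>

definition indiv :: "nat \<Rightarrow> nat set" where
  "indiv n = {1..n}"

definition subsets_m :: "nat \<Rightarrow> nat \<Rightarrow> nat set set" where
  "subsets_m n m = {G. G \<subseteq> indiv n \<and> card G = m}"

definition expmech_prob :: "real \<Rightarrow> nat \<Rightarrow> nat \<Rightarrow> (nat \<Rightarrow> real) \<Rightarrow> nat set \<Rightarrow> real" where
  "expmech_prob eps n m rs G =
     exp (eps * (\<Sum>j\<in>G. rs j) / 2) /
     (\<Sum>G'\<in>subsets_m n m. exp (eps * (\<Sum>j\<in>G'. rs j) / 2))"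

definition sel_prob :: "real \<Rightarrow> nat \<Rightarrow> nat \<Rightarrow> (nat \<Rightarrow> real) \<Rightarrow> nat \<Rightarrow> real" where
  "sel_prob eps n m rs i = (\<Sum>G\<in>{G \<in> subsets_m n m. i \<in> G}. expmech_prob eps n m rs G)"

text \<open>Pr{J_{i,eps}=1, Y_i=1} where the tuples are i.i.d. with distribution F
(product measure over N) and the mechanism randomizes given the realized scores.\<close>
definition joint_sel_qual ::
  "('x \<times> bool \<times> bool) measure \<Rightarrow> ('x \<Rightarrow> real) \<Rightarrow> nat \<Rightarrow> nat \<Rightarrow> real \<Rightarrow> nat \<Rightarrow> real" where
  "joint_sel_qual F r n m eps i =
     (\<integral>\<omega>. sel_prob eps n m (\<lambda>j. r (fst (\<omega> j))) i * (if snd (snd (\<omega> i)) then 1 else 0)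
       \<partial>(PiM (indiv n) (\<lambda>_. F)))"

definition accuracy ::
  "('x \<times> bool \<times> bool) measure \<Rightarrow> ('x \<Rightarrow> real) \<Rightarrow> nat \<Rightarrow> nat \<Rightarrow> real \<Rightarrow> real" where
  "accuracy F r n m eps = (1 / real m) * (\<Sum>i\<in>indiv n. joint_sel_qual F r n m eps i)"

definition cond_score_prob ::
  "('x \<times> bool \<times> bool) measure \<Rightarrow> ('x \<Rightarrow> real) \<Rightarrow> real \<Rightarrow> bool \<Rightarrow> real" where
  "cond_score_prob F r rho y =
     measure F {\<omega> \<in> space F. r (fst \<omega>) = rho \<and> snd (snd \<omega>) = y} /
     measure F {\<omega> \<in> space F. snd (snd \<omega>) = y}"

end

theory Submission
  imports Defs
begin


definition ee :: "(nat \<Rightarrow> real) \<Rightarrow> nat set \<Rightarrow> int \<Rightarrow> real" where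
  "ee w K k = (\<Sum>H\<in>{H. H \<subseteq> K \<and> int (card H) = k}. prod w H)"

lemma split_with:
  assumes "finite L" "x \<in> L"
  shows "(\<Sum>G\<in>{G. G \<subseteq> L \<and> int (card G) = k \<and> x \<in> G \<and> P G}. f G)
       = (\<Sum>H\<in>{H. H \<subseteq> L - {x} \<and> int (card H) = k - 1 \<and> P (insert x H)}. f (insert x H))"
proof (rule sum.reindex_bij_witness[of _ "\<lambda>H. insert x H" "\<lambda>G. G - {x}"])
  fix G assume G: "G \<in> {G. G \<subseteq> L \<and> int (card G) = k \<and> x \<in> G \<and> P G}"
  have GL: "G \<subseteq> L" using G by blast
  have fG: "finite G" using rev_finite_subset[OF assms(1) GL] .
  show "insert x (G - {x}) = G" using G by auto
  show "G - {x} \<in> {H. H \<subseteq> L - {x} \<and> int (card H) = k - 1 \<and> P (insert x H)}"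
  proof -
    have xG: "x \<in> G" using G by blast
    have c1: "card (G - {x}) = card G - 1" using card_Diff_singleton[OF xG] .
    have "G \<noteq> {}" using xG by blast
    then have c2: "card G \<ge> 1" using fG card_gt_0_iff[of G] by linarith
    have "int (card (G - {x})) = int (card G) - 1" using c1 c2 by simp
    then show ?thesis using G xG by (auto simp: insert_absorb)
  qed
next
  fix H assume H: "H \<in> {H. H \<subseteq> L - {x} \<and> int (card H) = k - 1 \<and> P (insert x H)}"
  have HL: "H \<subseteq> L" using H by blast
  have fH: "finite H" using rev_finite_subset[OF assms(1) HL] .
  show "insert x H - {x} = H" using H by auto
  show "insert x H \<in> {G. G \<subseteq> L \<and> int (card G) = k \<and> x \<in> G \<and> P G}"
  proof -
    have xH: "x \<notin> H" using H by blast
    have "card (insert x H) = card H + 1" using card_insert_disjoint[OF fH xH] by simp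
    then show ?thesis using H assms(2) by auto
  qed
qed (auto simp: insert_absorb)

lemma split_without:
  "(\<Sum>G\<in>{G. G \<subseteq> L \<and> int (card G) = k \<and> x \<notin> G \<and> P G}. f G)
       = (\<Sum>H\<in>{H. H \<subseteq> L - {x} \<and> int (card H) = k \<and> P H}. f H)"
  by (rule sum.cong) auto

lemma ee_rec:
  assumes "finite L" "x \<in> L"
  shows "ee w L k = ee w (L - {x}) k + w x * ee w (L - {x}) (k - 1)"
proof -
  have fin: "finite {G. G \<subseteq> L \<and> int (card G) = k}" using assms(1) by auto
  have eq: "{G. G \<subseteq> L \<and> int (card G) = k} = {G. G \<subseteq> L \<and> int (card G) = k \<and> x \<notin> G \<and> True}
     \<union> {G. G \<subseteq> L \<and> int (card G) = k \<and> x \<in> G \<and> True}" by auto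
  have "ee w L k = (\<Sum>G\<in>{G. G \<subseteq> L \<and> int (card G) = k \<and> x \<notin> G \<and> True}. prod w G)
     + (\<Sum>G\<in>{G. G \<subseteq> L \<and> int (card G) = k \<and> x \<in> G \<and> True}. prod w G)"
    unfolding ee_def by (subst eq, rule sum.union_disjoint) (use fin in \<open>auto intro: rev_finite_subset[OF fin]\<close>)
  moreover have "(\<Sum>G\<in>{G. G \<subseteq> L \<and> int (card G) = k \<and> x \<notin> G \<and> True}. prod w G) = ee w (L - {x}) k"
    using split_without[where P="\<lambda>_. True" and f="prod w" and L=L and k=k and x=x] unfolding ee_def by simp
  moreover have "(\<Sum>G\<in>{G. G \<subseteq> L \<and> int (card G) = k \<and> x \<in> G \<and> True}. prod w G)
      = (\<Sum>H\<in>{H. H \<subseteq> L - {x} \<and> int (card H) = k - 1 \<and> True}. prod w (insert x H))"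
    by (rule split_with[OF assms, where P="\<lambda>_. True" and f="prod w" and k=k])
  moreover have "(\<Sum>H\<in>{H. H \<subseteq> L - {x} \<and> int (card H) = k - 1 \<and> True}. prod w (insert x H))
      = (\<Sum>H\<in>{H. H \<subseteq> L - {x} \<and> int (card H) = k - 1}. w x * prod w H)"
  proof (rule sum.cong)
    fix H assume H: "H \<in> {H. H \<subseteq> L - {x} \<and> int (card H) = k - 1}"
    then have "finite H" using assms(1) rev_finite_subset by blast
    moreover have "x \<notin> H" using H by blast
    ultimately show "prod w (insert x H) = w x * prod w H" by simp
  qed simp
  ultimately show ?thesis by (simp add: ee_def sum_distrib_left)
qed

lemma ee_empty: "ee w {} k = (if k = 0 then 1 else 0)"
proof -
  have e: "{H. H \<subseteq> {} \<and> int (card H) = k} = (if k = 0 then {{}} else {})" by auto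
  show ?thesis unfolding ee_def e by simp
qed

lemma ee_logconc:
  assumes "finite K" "\<forall>i. w i \<ge> 0"
  shows "j \<le> k + 1 \<Longrightarrow> ee w K (j - 1) * ee w K (k + 1) \<le> ee w K j * ee w K k"
  using assms(1)
proof (induction K arbitrary: j k rule: finite_induct)
  case empty
  have "ee w {} j * ee w {} k \<ge> 0" by (simp add: ee_empty)
  moreover have "ee w {} (j - 1) * ee w {} (k + 1) = 0" using empty by (simp add: ee_empty)
  ultimately show ?case by linarith
next
  case (insert x K)
  have r: "ee w (insert x K) t = ee w K t + w x * ee w K (t - 1)" for t
    using ee_rec[of "insert x K" x w t] insert by auto
  define e where "e = ee w K"
  define c where "c = w x"
  have c0: "c \<ge> 0" using assms(2) by (simp add: c_def)
  have IH: "\<And>a b. a \<le> b + 1 \<Longrightarrow> e (a - 1) * e (b + 1) \<le> e a * e b"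
    using insert.IH unfolding e_def by blast
  have j2: "j - 1 - 1 = j - 2" by simp
  have k1: "k + 1 - 1 = k" by simp
  have T1: "e (j-1) * e (k+1) \<le> e j * e k" using IH insert.prems by blast
  have T2: "e (j-2) * e (k+1) \<le> e (j-1) * e k" using IH[of "j-1" k] insert.prems j2 by simp
  have T3: "e (j-2) * e k \<le> e (j-1) * e (k-1)" using IH[of "j-1" "k-1"] insert.prems j2 by simp
  have mid: "e (j-2) * e (k+1) \<le> e j * e (k-1)"
  proof (cases "j = k + 1")
    case True then show ?thesis by (simp add: mult.commute)
  next
    case False
    then have "e (j-1) * e k \<le> e j * e (k-1)" using IH[of j "k-1"] insert.prems by simp
    then show ?thesis using T2 by linarith
  qed
  have "ee w (insert x K) (j - 1) * ee w (insert x K) (k + 1)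
      = (e (j-1) + c * e (j-2)) * (e (k+1) + c * e k)" unfolding r e_def c_def j2 k1 ..
  also have "\<dots> = e (j-1) * e (k+1) + c * (e (j-1) * e k + e (j-2) * e (k+1)) + c*c * (e (j-2) * e k)"
    by (simp add: algebra_simps)
  also have "\<dots> \<le> e j * e k + c * (e (j-1) * e k + e j * e (k-1)) + c*c * (e (j-1) * e (k-1))"
  proof -
    have A: "c * (e (j-2) * e (k+1)) \<le> c * (e j * e (k-1))" using mult_left_mono[OF mid c0] .
    have B: "c * c * (e (j-2) * e k) \<le> c * c * (e (j-1) * e (k-1))"
      using mult_left_mono[OF T3 mult_nonneg_nonneg[OF c0 c0]] .
    show ?thesis using T1 A B unfolding distrib_left by linarith
  qed
  also have "\<dots> = (e j + c * e (j-1)) * (e k + c * e (k-1))" by (simp add: algebra_simps)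
  also have "\<dots> = ee w (insert x K) j * ee w (insert x K) k" unfolding r e_def c_def ..
  finally show ?case .
qed



lemma split_with_prod:
  fixes w :: "nat \<Rightarrow> real"
  assumes "finite L" "x \<in> L"
  shows "(\<Sum>G\<in>{G. G \<subseteq> L \<and> int (card G) = k \<and> x \<in> G \<and> P G}. prod w G)
       = w x * (\<Sum>H\<in>{H. H \<subseteq> L - {x} \<and> int (card H) = k - 1 \<and> P (insert x H)}. prod w H)"
proof -
  have "(\<Sum>G\<in>{G. G \<subseteq> L \<and> int (card G) = k \<and> x \<in> G \<and> P G}. prod w G)
      = (\<Sum>H\<in>{H. H \<subseteq> L - {x} \<and> int (card H) = k - 1 \<and> P (insert x H)}. prod w (insert x H))"
    by (rule split_with[OF assms])
  also have "\<dots> = (\<Sum>H\<in>{H. H \<subseteq> L - {x} \<and> int (card H) = k - 1 \<and> P (insert x H)}. w x * prod w H)"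
  proof (rule sum.cong)
    fix H assume H: "H \<in> {H. H \<subseteq> L - {x} \<and> int (card H) = k - 1 \<and> P (insert x H)}"
    have HL: "H \<subseteq> L" using H by blast
    have "finite H" using rev_finite_subset[OF assms(1) HL] .
    moreover have "x \<notin> H" using H by blast
    ultimately show "prod w (insert x H) = w x * prod w H" by simp
  qed simp
  finally show ?thesis by (simp add: sum_distrib_left)
qed

lemma negcorr:
  fixes w :: "nat \<Rightarrow> real"
  assumes fin: "finite I" and w: "\<forall>i. w i \<ge> 0" and ij: "i \<in> I" "j \<in> I" "i \<noteq> j"
  shows "(\<Sum>G\<in>{G. G \<subseteq> I \<and> card G = m}. if i \<in> G \<and> j \<in> G then prod w G else 0)
           * (\<Sum>G\<in>{G. G \<subseteq> I \<and> card G = m}. prod w G)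
         \<le> (\<Sum>G\<in>{G. G \<subseteq> I \<and> card G = m}. if i \<in> G then prod w G else 0)
           * (\<Sum>G\<in>{G. G \<subseteq> I \<and> card G = m}. if j \<in> G then prod w G else 0)"
proof -
  define K where "K = I - {i} - {j}"
  have K': "I - {j} - {i} = K" unfolding K_def by blast
  have fin1: "finite (I - {i})" "finite (I - {j})" using fin by auto
  have j1: "j \<in> I - {i}" and i1: "i \<in> I - {j}" using ij by auto
  have S: "{G. G \<subseteq> I \<and> card G = m} = {G. G \<subseteq> I \<and> int (card G) = int m}" by simp
  have finS: "finite {G. G \<subseteq> I \<and> card G = m}" using fin by simp
  define E0 where "E0 = ee w K (int m)"
  define E1 where "E1 = ee w K (int m - 1)"
  define E2 where "E2 = ee w K (int m - 2)"
  have Z: "(\<Sum>G\<in>{G. G \<subseteq> I \<and> card G = m}. prod w G) = E0 + w j * E1 + w i * (E1 + w j * E2)"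
  proof -
    have "(\<Sum>G\<in>{G. G \<subseteq> I \<and> card G = m}. prod w G) = ee w I (int m)" unfolding ee_def S ..
    also have "\<dots> = ee w (I - {i}) (int m) + w i * ee w (I - {i}) (int m - 1)"
      by (rule ee_rec[OF fin ij(1)])
    also have "ee w (I - {i}) (int m) = E0 + w j * E1"
      unfolding ee_rec[OF fin1(1) j1, of w] E0_def E1_def K_def ..
    also have "ee w (I - {i}) (int m - 1) = E1 + w j * E2"
      unfolding ee_rec[OF fin1(1) j1, of w] E1_def E2_def K_def by simp
    finally show ?thesis .
  qed
  have Wi: "(\<Sum>G\<in>{G. G \<subseteq> I \<and> card G = m}. if i \<in> G then prod w G else 0) = w i * (E1 + w j * E2)"
  proof -
    have "(\<Sum>G\<in>{G. G \<subseteq> I \<and> card G = m}. if i \<in> G then prod w G else 0)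
        = (\<Sum>G\<in>{G. G \<subseteq> I \<and> int (card G) = int m \<and> i \<in> G \<and> True}. prod w G)"
      using finS by (simp add: sum.inter_filter[symmetric] conj_ac)
    also have "\<dots> = w i * ee w (I - {i}) (int m - 1)"
      unfolding split_with_prod[OF fin ij(1)] ee_def by simp
    also have "ee w (I - {i}) (int m - 1) = E1 + w j * E2"
      unfolding ee_rec[OF fin1(1) j1, of w] E1_def E2_def K_def by simp
    finally show ?thesis .
  qed
  have Wj: "(\<Sum>G\<in>{G. G \<subseteq> I \<and> card G = m}. if j \<in> G then prod w G else 0) = w j * (E1 + w i * E2)"
  proof -
    have "(\<Sum>G\<in>{G. G \<subseteq> I \<and> card G = m}. if j \<in> G then prod w G else 0)
        = (\<Sum>G\<in>{G. G \<subseteq> I \<and> int (card G) = int m \<and> j \<in> G \<and> True}. prod w G)"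
      using finS by (simp add: sum.inter_filter[symmetric] conj_ac)
    also have "\<dots> = w j * ee w (I - {j}) (int m - 1)"
      unfolding split_with_prod[OF fin ij(2)] ee_def by simp
    also have "ee w (I - {j}) (int m - 1) = E1 + w i * E2"
      unfolding ee_rec[OF fin1(2) i1, of w] E1_def E2_def K' by simp
    finally show ?thesis .
  qed
  have Wij: "(\<Sum>G\<in>{G. G \<subseteq> I \<and> card G = m}. if i \<in> G \<and> j \<in> G then prod w G else 0) = w i * w j * E2"
  proof -
    have "(\<Sum>G\<in>{G. G \<subseteq> I \<and> card G = m}. if i \<in> G \<and> j \<in> G then prod w G else 0)
        = (\<Sum>G\<in>{G. G \<subseteq> I \<and> int (card G) = int m \<and> i \<in> G \<and> j \<in> G}. prod w G)"
      using finS by (simp add: sum.inter_filter[symmetric] conj_ac)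
    also have "\<dots> = w i * (\<Sum>H\<in>{H. H \<subseteq> I - {i} \<and> int (card H) = int m - 1 \<and> j \<in> insert i H}. prod w H)"
      by (rule split_with_prod[OF fin ij(1)])
    also have "{H. H \<subseteq> I - {i} \<and> int (card H) = int m - 1 \<and> j \<in> insert i H}
        = {H. H \<subseteq> I - {i} \<and> int (card H) = int m - 1 \<and> j \<in> H \<and> True}" using ij by auto
    also have "(\<Sum>H\<in>{H. H \<subseteq> I - {i} \<and> int (card H) = int m - 1 \<and> j \<in> H \<and> True}. prod w H)
        = w j * ee w K (int m - 1 - 1)"
      unfolding split_with_prod[OF fin1(1) j1] ee_def K_def by simp
    finally show ?thesis by (simp add: E2_def)
  qed
  have newton: "E2 * E0 \<le> E1 * E1"
  proof -
    have fK: "finite K" using fin K_def by simp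
    have "ee w K (int m - 1 - 1) * ee w K (int m - 1 + 1) \<le> ee w K (int m - 1) * ee w K (int m - 1)"
      by (rule ee_logconc[OF fK w]) simp
    then show ?thesis by (simp add: E0_def E1_def E2_def)
  qed
  have wi: "w i \<ge> 0" and wj: "w j \<ge> 0" using w by auto
  have diff: "w i * (E1 + w j * E2) * (w j * (E1 + w i * E2)) - w i * w j * E2 * (E0 + w j * E1 + w i * (E1 + w j * E2))
      = (w i * w j) * (E1 * E1 - E2 * E0)" by (simp add: algebra_simps)
  have "(w i * w j) * (E1 * E1 - E2 * E0) \<ge> 0" using wi wj newton by simp
  then show ?thesis unfolding Z Wi Wj Wij using diff by linarith
qed



lemma cov_nonneg:
  fixes w a b :: "nat \<Rightarrow> real"
  assumes fin: "finite I" and w: "\<forall>i. w i \<ge> 0"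
    and mono: "\<forall>i\<in>I. \<forall>j\<in>I. (a i - a j) * (b i - b j) \<ge> 0"
  shows "(\<Sum>G\<in>{G. G \<subseteq> I \<and> card G = m}. prod w G * sum a G) * (\<Sum>G\<in>{G. G \<subseteq> I \<and> card G = m}. prod w G * sum b G)
       \<le> (\<Sum>G\<in>{G. G \<subseteq> I \<and> card G = m}. prod w G * sum a G * sum b G) * (\<Sum>G\<in>{G. G \<subseteq> I \<and> card G = m}. prod w G)"
proof -
  define S where "S = {G. G \<subseteq> I \<and> card G = m}"
  define W where "W G = prod w G" for G
  define Z where "Z = (\<Sum>G\<in>S. W G)"
  define Wi where "Wi i = (\<Sum>G\<in>S. if i \<in> G then W G else 0)" for i
  define Wij where "Wij i j = (\<Sum>G\<in>S. if i \<in> G \<and> j \<in> G then W G else 0)" for i j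
  have finS: "finite S" unfolding S_def using fin by simp
  have sumI: "sum f G = (\<Sum>i\<in>I. if i \<in> G then f i else 0)" if "G \<in> S" for G and f :: "nat \<Rightarrow> real"
  proof -
    have "I \<inter> G = G" using that unfolding S_def by blast
    then show ?thesis using sum.inter_restrict[OF fin, of f G] by simp
  qed
  have lin: "(\<Sum>G\<in>S. W G * sum c G) = (\<Sum>i\<in>I. c i * Wi i)" for c :: "nat \<Rightarrow> real"
  proof -
    have "(\<Sum>G\<in>S. W G * sum c G) = (\<Sum>G\<in>S. \<Sum>i\<in>I. c i * (if i \<in> G then W G else 0))"
    proof (rule sum.cong[OF refl])
      fix G assume "G \<in> S"
      then show "W G * sum c G = (\<Sum>i\<in>I. c i * (if i \<in> G then W G else 0))"
        by (simp add: sumI[of G c] sum_distrib_left, intro sum.cong refl, simp)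
    qed
    also have "\<dots> = (\<Sum>i\<in>I. \<Sum>G\<in>S. c i * (if i \<in> G then W G else 0))" by (rule sum.swap)
    also have "\<dots> = (\<Sum>i\<in>I. c i * Wi i)" by (simp add: Wi_def sum_distrib_left)
    finally show ?thesis .
  qed
  have quad: "(\<Sum>G\<in>S. W G * sum a G * sum b G) = (\<Sum>i\<in>I. \<Sum>j\<in>I. a i * b j * Wij i j)"
  proof -
    have "(\<Sum>G\<in>S. W G * sum a G * sum b G) = (\<Sum>G\<in>S. \<Sum>i\<in>I. \<Sum>j\<in>I. a i * b j * (if i \<in> G \<and> j \<in> G then W G else 0))"
    proof (rule sum.cong[OF refl])
      fix G assume G: "G \<in> S"
      have ab: "sum a G * sum b G = (\<Sum>i\<in>I. \<Sum>j\<in>I. (if i \<in> G then a i else 0) * (if j \<in> G then b j else 0))"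
        by (simp only: sumI[OF G, of a] sumI[OF G, of b] sum_product)
      have "W G * sum a G * sum b G = (\<Sum>i\<in>I. \<Sum>j\<in>I. W G * ((if i \<in> G then a i else 0) * (if j \<in> G then b j else 0)))"
        unfolding mult.assoc ab by (simp add: sum_distrib_left)
      also have "\<dots> = (\<Sum>i\<in>I. \<Sum>j\<in>I. a i * b j * (if i \<in> G \<and> j \<in> G then W G else 0))"
        by (intro sum.cong refl) auto
      finally show "W G * sum a G * sum b G = (\<Sum>i\<in>I. \<Sum>j\<in>I. a i * b j * (if i \<in> G \<and> j \<in> G then W G else 0))" .
    qed
    also have "\<dots> = (\<Sum>i\<in>I. \<Sum>G\<in>S. \<Sum>j\<in>I. a i * b j * (if i \<in> G \<and> j \<in> G then W G else 0))" by (rule sum.swap)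
    also have "\<dots> = (\<Sum>i\<in>I. \<Sum>j\<in>I. \<Sum>G\<in>S. a i * b j * (if i \<in> G \<and> j \<in> G then W G else 0))"
      by (intro sum.cong refl) (rule sum.swap)
    also have "\<dots> = (\<Sum>i\<in>I. \<Sum>j\<in>I. a i * b j * Wij i j)" by (simp add: Wij_def sum_distrib_left)
    finally show ?thesis .
  qed
  have cardS: "\<And>G. G \<in> S \<Longrightarrow> card G = m" unfolding S_def by blast
  have row: "(\<Sum>j\<in>I. Wij i j) = real m * Wi i" for i
  proof -
    have "(\<Sum>j\<in>I. Wij i j) = (\<Sum>G\<in>S. \<Sum>j\<in>I. if i \<in> G \<and> j \<in> G then W G else 0)"
      unfolding Wij_def by (rule sum.swap)
    also have "\<dots> = (\<Sum>G\<in>S. if i \<in> G then real m * W G else 0)"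
    proof (rule sum.cong[OF refl])
      fix G assume G: "G \<in> S"
      have "(\<Sum>j\<in>I. if j \<in> G then W G else 0) = sum (\<lambda>_. W G) G" using sumI[OF G, of "\<lambda>_. W G"] by simp
      also have "\<dots> = real m * W G" using cardS[OF G] by simp
      finally show "(\<Sum>j\<in>I. if i \<in> G \<and> j \<in> G then W G else 0) = (if i \<in> G then real m * W G else 0)"
        by (cases "i \<in> G") simp_all
    qed
    also have "\<dots> = real m * Wi i" unfolding Wi_def sum_distrib_left by (intro sum.cong refl) simp
    finally show ?thesis .
  qed
  have tot: "(\<Sum>i\<in>I. Wi i) = real m * Z"
  proof -
    have "(\<Sum>i\<in>I. Wi i) = (\<Sum>G\<in>S. \<Sum>i\<in>I. if i \<in> G then W G else 0)"
      unfolding Wi_def by (rule sum.swap)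
    also have "\<dots> = (\<Sum>G\<in>S. real m * W G)"
    proof (rule sum.cong[OF refl])
      fix G assume G: "G \<in> S"
      have "(\<Sum>i\<in>I. if i \<in> G then W G else 0) = sum (\<lambda>_. W G) G" using sumI[OF G, of "\<lambda>_. W G"] by simp
      also have "\<dots> = real m * W G" using cardS[OF G] by simp
      finally show "(\<Sum>i\<in>I. if i \<in> G then W G else 0) = real m * W G" .
    qed
    also have "\<dots> = real m * Z" unfolding Z_def by (simp add: sum_distrib_left)
    finally show ?thesis .
  qed
  have sym: "Wij i j = Wij j i" for i j unfolding Wij_def by (intro sum.cong refl) auto
  have negc: "Wij i j * Z \<le> Wi i * Wi j" if "i \<in> I" "j \<in> I" "i \<noteq> j" for i j
    using negcorr[OF fin w that, of m] unfolding Wij_def Wi_def Z_def S_def W_def .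
  define D where "D i j = Z * Wij i j - Wi i * Wi j" for i j
  have Dsym: "D i j = D j i" for i j unfolding D_def using sym[of i j] by (simp add: mult.commute)
  have Dneg: "D i j \<le> 0" if "i \<in> I" "j \<in> I" "i \<noteq> j" for i j
    using negc[OF that] unfolding D_def by (simp add: mult.commute)
  have Drow: "(\<Sum>j\<in>I. D i j) = 0" for i
    unfolding D_def by (simp add: sum_subtractf sum_distrib_left[symmetric] row tot)
  define Q where "Q = (\<Sum>i\<in>I. \<Sum>j\<in>I. D i j * a i * b j)"
  have goalQ: "(\<Sum>G\<in>S. W G * sum a G * sum b G) * Z - (\<Sum>G\<in>S. W G * sum a G) * (\<Sum>G\<in>S. W G * sum b G) = Q"
  proof -
    have e1: "(\<Sum>i\<in>I. \<Sum>j\<in>I. a i * b j * Wij i j) * Z = (\<Sum>i\<in>I. \<Sum>j\<in>I. Z * Wij i j * a i * b j)"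
      by (simp add: sum_distrib_right sum_distrib_left mult_ac)
    have e2: "(\<Sum>i\<in>I. a i * Wi i) * (\<Sum>j\<in>I. b j * Wi j) = (\<Sum>i\<in>I. \<Sum>j\<in>I. Wi i * Wi j * a i * b j)"
      by (simp add: sum_product mult_ac)
    have e3: "Q = (\<Sum>i\<in>I. \<Sum>j\<in>I. Z * Wij i j * a i * b j) - (\<Sum>i\<in>I. \<Sum>j\<in>I. Wi i * Wi j * a i * b j)"
      unfolding Q_def D_def by (simp add: left_diff_distrib sum_subtractf)
    show ?thesis unfolding quad lin e1 e2 e3 ..
  qed
  have Q1: "Q = (\<Sum>i\<in>I. \<Sum>j\<in>I. D i j * a i * (b j - b i))"
  proof -
    have "(\<Sum>i\<in>I. \<Sum>j\<in>I. D i j * a i * (b j - b i)) = (\<Sum>i\<in>I. (\<Sum>j\<in>I. D i j * a i * b j) - a i * b i * (\<Sum>j\<in>I. D i j))"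
      by (simp add: algebra_simps sum_subtractf sum_distrib_left)
    also have "\<dots> = Q" unfolding Q_def by (simp add: Drow)
    finally show ?thesis by simp
  qed
  have Q2: "Q = (\<Sum>i\<in>I. \<Sum>j\<in>I. D i j * a j * (b i - b j))"
  proof -
    have "Q = (\<Sum>j\<in>I. \<Sum>i\<in>I. D j i * a j * (b i - b j))" using Q1 by simp
    also have "\<dots> = (\<Sum>i\<in>I. \<Sum>j\<in>I. D j i * a j * (b i - b j))" by (rule sum.swap)
    also have "\<dots> = (\<Sum>i\<in>I. \<Sum>j\<in>I. D i j * a j * (b i - b j))" by (simp add: Dsym)
    finally show ?thesis .
  qed
  have "2 * Q = (\<Sum>i\<in>I. \<Sum>j\<in>I. D i j * ((a i - a j) * (b j - b i)))"
    unfolding mult_2 apply (subst (1) Q1) apply (subst Q2)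
    by (simp add: sum.distrib[symmetric] algebra_simps)
  also have "\<dots> \<ge> 0"
  proof (intro sum_nonneg)
    fix i j assume i: "i \<in> I" and j: "j \<in> I"
    show "D i j * ((a i - a j) * (b j - b i)) \<ge> 0"
    proof (cases "i = j")
      case True then show ?thesis by simp
    next
      case False
      have "(a i - a j) * (b j - b i) \<le> 0" using mono i j by (smt (verit) mult_minus_right)
      then show ?thesis using Dneg[OF i j False] by (simp add: mult_nonpos_nonpos)
    qed
  qed
  finally have "Q \<ge> 0" by simp
  then show ?thesis using goalQ unfolding S_def Z_def W_def by simp
qed



lemma sel_formula:
  "(\<Sum>i\<in>indiv n. sel_prob eps n m rs i * g i)
   = (\<Sum>G\<in>subsets_m n m. exp (eps * sum rs G / 2) * sum g G) / (\<Sum>G\<in>subsets_m n m. exp (eps * sum rs G / 2))"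
proof -
  define S where "S = subsets_m n m"
  define Z where "Z = (\<Sum>G\<in>S. exp (eps * sum rs G / 2))"
  define e where "e G = exp (eps * sum rs G / 2)" for G
  have finI: "finite (indiv n)" by (simp add: indiv_def)
  have finS: "finite S" unfolding S_def subsets_m_def using finI by simp
  have GI: "G \<subseteq> indiv n" if "G \<in> S" for G using that unfolding S_def subsets_m_def by blast
  have "(\<Sum>i\<in>indiv n. sel_prob eps n m rs i * g i) = (\<Sum>i\<in>indiv n. \<Sum>G\<in>S. if i \<in> G then e G / Z * g i else 0)"
  proof (rule sum.cong[OF refl])
    fix i
    have "sel_prob eps n m rs i = (\<Sum>G\<in>S. if i \<in> G then e G / Z else 0)"
      unfolding sel_prob_def expmech_prob_def S_def[symmetric] Z_def[symmetric] e_def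
      using finS by (simp add: sum.inter_filter)
    then show "sel_prob eps n m rs i * g i = (\<Sum>G\<in>S. if i \<in> G then e G / Z * g i else 0)"
      by (simp add: sum_distrib_right, intro sum.cong refl, simp)
  qed
  also have "\<dots> = (\<Sum>G\<in>S. \<Sum>i\<in>indiv n. if i \<in> G then e G / Z * g i else 0)" by (rule sum.swap)
  also have "\<dots> = (\<Sum>G\<in>S. e G / Z * sum g G)"
  proof (rule sum.cong[OF refl])
    fix G assume G: "G \<in> S"
    have "indiv n \<inter> G = G" using GI[OF G] by blast
    then have "sum (\<lambda>i. e G / Z * g i) G = (\<Sum>i\<in>indiv n. if i \<in> G then e G / Z * g i else 0)"
      using sum.inter_restrict[OF finI, of "\<lambda>i. e G / Z * g i" G] by simp
    then show "(\<Sum>i\<in>indiv n. if i \<in> G then e G / Z * g i else 0) = e G / Z * sum g G"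
      by (simp add: sum_distrib_left)
  qed
  also have "\<dots> = (\<Sum>G\<in>S. e G * sum g G) / Z" by (simp add: sum_divide_distrib)
  finally show ?thesis unfolding Z_def e_def S_def .
qed

lemma Z_pos:
  fixes eps :: real and rs :: "nat \<Rightarrow> real"
  assumes "m \<le> n"
  shows "(\<Sum>G\<in>subsets_m n m. exp (eps * sum rs G / 2)) > 0"
proof (rule sum_pos)
  show "finite (subsets_m n m)" unfolding subsets_m_def indiv_def by simp
  have "{1..m} \<in> subsets_m n m" using assms unfolding subsets_m_def indiv_def by auto
  then show "subsets_m n m \<noteq> {}" by blast
qed simp

lemma mono_core:
  fixes g rs :: "nat \<Rightarrow> real"
  assumes com: "\<forall>i\<in>indiv n. \<forall>j\<in>indiv n. (g i - g j) * (rs i - rs j) \<ge> 0"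
    and mn: "m \<le> n" and le: "eps \<le> eps'"
  shows "(\<Sum>i\<in>indiv n. sel_prob eps n m rs i * g i) \<le> (\<Sum>i\<in>indiv n. sel_prob eps' n m rs i * g i)"
proof -
  define S where "S = subsets_m n m"
  have S': "S = {G. G \<subseteq> indiv n \<and> card G = m}" unfolding S_def subsets_m_def ..
  have finI: "finite (indiv n)" by (simp add: indiv_def)
  define N where "N x = (\<Sum>G\<in>S. exp (x * sum rs G / 2) * sum g G)" for x
  define Z where "Z x = (\<Sum>G\<in>S. exp (x * sum rs G / 2))" for x
  define N' where "N' x = (\<Sum>G\<in>S. exp (x * sum rs G / 2) * (sum rs G / 2) * sum g G)" for x
  define Z' where "Z' x = (\<Sum>G\<in>S. exp (x * sum rs G / 2) * (sum rs G / 2))" for x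
  have f: "(\<Sum>i\<in>indiv n. sel_prob x n m rs i * g i) = N x / Z x" for x
    unfolding N_def Z_def S_def by (rule sel_formula)
  have Zp: "Z x > 0" for x unfolding Z_def S_def using Z_pos[OF mn] .
  have dN: "(N has_real_derivative N' x) (at x)" for x
    unfolding N_def N'_def by (rule DERIV_sum) (auto intro!: derivative_eq_intros)
  have dZ: "(Z has_real_derivative Z' x) (at x)" for x
    unfolding Z_def Z'_def by (rule DERIV_sum) (auto intro!: derivative_eq_intros)
  have key: "N' x * Z x - N x * Z' x \<ge> 0" for x
  proof -
    define w where "w j = exp (x * rs j / 2)" for j
    have pw: "prod w G = exp (x * sum rs G / 2)" if "G \<in> S" for G
    proof -
      have "finite G" using that finI unfolding S' using rev_finite_subset by blast
      then show ?thesis unfolding w_def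
        by (simp add: exp_sum[symmetric] sum_distrib_left sum_divide_distrib)
    qed
    have c: "(\<Sum>G\<in>S. prod w G * sum g G) * (\<Sum>G\<in>S. prod w G * sum rs G)
       \<le> (\<Sum>G\<in>S. prod w G * sum g G * sum rs G) * (\<Sum>G\<in>S. prod w G)"
      unfolding S' by (rule cov_nonneg[OF finI]) (auto simp: w_def com)
    have "N x = (\<Sum>G\<in>S. prod w G * sum g G)" unfolding N_def by (intro sum.cong refl) (simp add: pw)
    moreover have "Z x = (\<Sum>G\<in>S. prod w G)" unfolding Z_def by (intro sum.cong refl) (simp add: pw)
    moreover have "N' x = (\<Sum>G\<in>S. prod w G * sum g G * sum rs G) / 2"
    proof -
      have "N' x = (\<Sum>G\<in>S. prod w G * sum g G * sum rs G / 2)"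
        unfolding N'_def by (intro sum.cong refl) (simp add: pw algebra_simps)
      then show ?thesis by (simp add: sum_divide_distrib)
    qed
    moreover have "Z' x = (\<Sum>G\<in>S. prod w G * sum rs G) / 2"
    proof -
      have "Z' x = (\<Sum>G\<in>S. prod w G * sum rs G / 2)"
        unfolding Z'_def by (intro sum.cong refl) (simp add: pw algebra_simps)
      then show ?thesis by (simp add: sum_divide_distrib)
    qed
    ultimately have "N' x * Z x - N x * Z' x = ((\<Sum>G\<in>S. prod w G * sum g G * sum rs G) * (\<Sum>G\<in>S. prod w G)
        - (\<Sum>G\<in>S. prod w G * sum g G) * (\<Sum>G\<in>S. prod w G * sum rs G)) / 2"
      by (simp only:) (simp add: field_simps)
    then show ?thesis using c by simp
  qed
  have "N eps / Z eps \<le> N eps' / Z eps'"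
  proof (rule DERIV_nonneg_imp_nondecreasing[OF le])
    fix x
    show "\<exists>y. ((\<lambda>x. N x / Z x) has_real_derivative y) (at x) \<and> 0 \<le> y"
    proof (intro exI conjI)
      show "((\<lambda>x. N x / Z x) has_real_derivative (N' x * Z x - N x * Z' x) / (Z x * Z x)) (at x)"
        using DERIV_divide[OF dN dZ] Zp[of x] by simp
      show "0 \<le> (N' x * Z x - N x * Z' x) / (Z x * Z x)" using key[of x] Zp[of x] by simp
    qed
  qed
  then show ?thesis unfolding f .
qed



lemma sel_prob_cong:
  assumes "\<forall>j\<in>indiv n. rs j = rs' j"
  shows "sel_prob eps n m rs i = sel_prob eps n m rs' i"
proof -
  have s: "sum rs G = sum rs' G" if "G \<in> subsets_m n m" for G
    using that assms unfolding subsets_m_def by (intro sum.cong refl) blast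
  have Z: "(\<Sum>G'\<in>subsets_m n m. exp (eps * sum rs G' / 2)) = (\<Sum>G'\<in>subsets_m n m. exp (eps * sum rs' G' / 2))"
    using s by (intro sum.cong refl) simp
  show ?thesis unfolding sel_prob_def expmech_prob_def Z
    using s by (intro sum.cong refl) simp
qed

lemma joint_formula:
  fixes F :: "('x \<times> bool \<times> bool) measure" and r :: "'x \<Rightarrow> real"
  assumes F_prob: "prob_space F"
    and R_meas: "(\<lambda>\<omega>. r (fst \<omega>)) \<in> borel_measurable F"
    and Y_meas: "{\<omega> \<in> space F. snd (snd \<omega>)} \<in> sets F"
    and R_fin: "finite Rset"
    and r_into: "\<forall>x. r x \<in> Rset"
    and i: "i \<in> indiv n"
  shows "joint_sel_qual F r n m eps i =
    (\<Sum>\<rho>\<in>PiE (indiv n) (\<lambda>_. Rset). sel_prob eps n m \<rho> i *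
       (measure F {x \<in> space F. r (fst x) = \<rho> i \<and> snd (snd x)} *
        (\<Prod>j\<in>indiv n - {i}. measure F {x \<in> space F. r (fst x) = \<rho> j})))"
proof -
  interpret F: prob_space F by (rule F_prob)
  interpret PS: product_sigma_finite "\<lambda>_::nat. F"
    by standard
  define I where "I = indiv n"
  have finI: "finite I" by (simp add: I_def indiv_def)
  define \<mu> where "\<mu> = PiM I (\<lambda>_. F)"
  have prob\<mu>: "prob_space \<mu>" unfolding \<mu>_def by (rule prob_space_PiM) (simp add: F_prob)
  interpret MU: prob_space \<mu> by (rule prob\<mu>)
  define A where "A c = {x \<in> space F. r (fst x) = c}" for c
  define A1 where "A1 c = {x \<in> space F. r (fst x) = c \<and> snd (snd x)}" for c
  have Asets: "A c \<in> sets F" for c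
  proof -
    have "A c = (\<lambda>\<omega>. r (fst \<omega>)) -` {c} \<inter> space F" unfolding A_def by auto
    then show ?thesis using measurable_sets[OF R_meas, of "{c}"] by simp
  qed
  have A1sets: "A1 c \<in> sets F" for c
  proof -
    have "A1 c = A c \<inter> {\<omega> \<in> space F. snd (snd \<omega>)}" unfolding A_def A1_def by auto
    then show ?thesis using Asets Y_meas by auto
  qed
  define B where "B \<rho> = PiE I (\<lambda>j. if j = i then A1 (\<rho> j) else A (\<rho> j))" for \<rho>
  have Bsets: "B \<rho> \<in> sets \<mu>" for \<rho>
    unfolding B_def \<mu>_def by (rule sets_PiM_I_finite[OF finI]) (simp add: Asets A1sets)
  have Bmeas: "measure \<mu> (B \<rho>) = measure F (A1 (\<rho> i)) * (\<Prod>j\<in>I - {i}. measure F (A (\<rho> j)))" for \<rho>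
  proof -
    have "emeasure \<mu> (B \<rho>) = (\<Prod>j\<in>I. emeasure F (if j = i then A1 (\<rho> j) else A (\<rho> j)))"
      unfolding B_def \<mu>_def by (rule PS.emeasure_PiM[OF finI]) (simp add: Asets A1sets)
    also have "\<dots> = (\<Prod>j\<in>I. ennreal (measure F (if j = i then A1 (\<rho> j) else A (\<rho> j))))"
      by (simp add: F.emeasure_eq_measure)
    also have "\<dots> = ennreal (\<Prod>j\<in>I. measure F (if j = i then A1 (\<rho> j) else A (\<rho> j)))"
      by (rule prod_ennreal) simp
    finally have "measure \<mu> (B \<rho>) = (\<Prod>j\<in>I. measure F (if j = i then A1 (\<rho> j) else A (\<rho> j)))"
      by (simp add: measure_def prod_nonneg)
    also have "\<dots> = measure F (A1 (\<rho> i)) * (\<Prod>j\<in>I - {i}. measure F (A (\<rho> j)))"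
      using i finI unfolding I_def[symmetric] by (simp add: prod.remove)
    finally show ?thesis .
  qed
  define P where "P = PiE I (\<lambda>_. Rset)"
  have finP: "finite P" unfolding P_def using finI R_fin by (simp add: finite_PiE)
  have pointwise: "sel_prob eps n m (\<lambda>j. r (fst (\<omega> j))) i * (if snd (snd (\<omega> i)) then 1 else 0)
      = (\<Sum>\<rho>\<in>P. sel_prob eps n m \<rho> i * indicator (B \<rho>) \<omega>)" if \<omega>: "\<omega> \<in> space \<mu>" for \<omega>
  proof -
    define \<rho>0 where "\<rho>0 = restrict (\<lambda>j. r (fst (\<omega> j))) I"
    have \<rho>0P: "\<rho>0 \<in> P" unfolding \<rho>0_def P_def using r_into by auto
    have \<omega>sp: "\<omega> \<in> PiE I (\<lambda>_. space F)" using \<omega> unfolding \<mu>_def by (simp add: space_PiM)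
    have iI: "i \<in> I" using i I_def by simp
    have memB: "\<omega> \<in> B \<rho> \<longleftrightarrow> \<rho> = \<rho>0 \<and> snd (snd (\<omega> i))" if \<rho>: "\<rho> \<in> P" for \<rho>
    proof
      assume a: "\<omega> \<in> B \<rho>"
      have "\<forall>j\<in>I. \<rho> j = \<rho>0 j"
      proof
        fix j assume j: "j \<in> I"
        have "\<omega> j \<in> (if j = i then A1 (\<rho> j) else A (\<rho> j))" using a j unfolding B_def by blast
        then show "\<rho> j = \<rho>0 j" using j unfolding \<rho>0_def A_def A1_def by (auto split: if_splits)
      qed
      moreover have "\<rho> \<in> extensional I" using \<rho> unfolding P_def PiE_iff by blast
      moreover have "\<rho>0 \<in> extensional I" using \<rho>0P unfolding P_def PiE_iff by blast
      ultimately have "\<rho> = \<rho>0" by (metis extensionalityI)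
      moreover have "\<omega> i \<in> A1 (\<rho> i)" using a iI unfolding B_def by force
      ultimately show "\<rho> = \<rho>0 \<and> snd (snd (\<omega> i))" unfolding A1_def by simp
    next
      assume a: "\<rho> = \<rho>0 \<and> snd (snd (\<omega> i))"
      show "\<omega> \<in> B \<rho>" unfolding B_def
      proof (rule PiE_I)
        fix j assume j: "j \<in> I"
        have "\<omega> j \<in> space F" using \<omega>sp j by blast
        then show "\<omega> j \<in> (if j = i then A1 (\<rho> j) else A (\<rho> j))"
          using a j unfolding A_def A1_def \<rho>0_def by auto
      next
        fix j assume "j \<notin> I"
        then show "\<omega> j = undefined" using \<omega>sp by blast
      qed
    qed
    have "(\<Sum>\<rho>\<in>P. sel_prob eps n m \<rho> i * indicator (B \<rho>) \<omega>)
        = (\<Sum>\<rho>\<in>P. if \<rho> = \<rho>0 then sel_prob eps n m \<rho>0 i * (if snd (snd (\<omega> i)) then 1 else 0) else 0)"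
      by (intro sum.cong refl) (auto simp: memB indicator_def)
    also have "\<dots> = sel_prob eps n m \<rho>0 i * (if snd (snd (\<omega> i)) then 1 else 0)"
      using finP \<rho>0P by simp
    also have "sel_prob eps n m \<rho>0 i = sel_prob eps n m (\<lambda>j. r (fst (\<omega> j))) i"
      by (rule sel_prob_cong) (simp add: \<rho>0_def I_def)
    finally show ?thesis by simp
  qed
  have "joint_sel_qual F r n m eps i = (\<integral>\<omega>. (\<Sum>\<rho>\<in>P. sel_prob eps n m \<rho> i * indicator (B \<rho>) \<omega>) \<partial>\<mu>)"
    unfolding joint_sel_qual_def \<mu>_def[symmetric] I_def[symmetric]
    by (rule Bochner_Integration.integral_cong[OF refl]) (rule pointwise)
  also have "\<dots> = (\<Sum>\<rho>\<in>P. (\<integral>\<omega>. sel_prob eps n m \<rho> i * indicator (B \<rho>) \<omega> \<partial>\<mu>))"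
  proof (rule Bochner_Integration.integral_sum)
    fix \<rho> assume "\<rho> \<in> P"
    show "integrable \<mu> (\<lambda>\<omega>. sel_prob eps n m \<rho> i * indicator (B \<rho>) \<omega>)"
      using Bsets by (intro integrable_mult_right integrable_real_indicator) (auto simp: MU.emeasure_eq_measure)
  qed
  also have "\<dots> = (\<Sum>\<rho>\<in>P. sel_prob eps n m \<rho> i * measure \<mu> (B \<rho>))"
  proof (intro sum.cong refl)
    fix \<rho> assume "\<rho> \<in> P"
    have "B \<rho> \<inter> space \<mu> = B \<rho>" using Bsets[of \<rho>] sets.sets_into_space by blast
    then show "(\<integral>\<omega>. sel_prob eps n m \<rho> i * indicator (B \<rho>) \<omega> \<partial>\<mu>) = sel_prob eps n m \<rho> i * measure \<mu> (B \<rho>)"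
      by simp
  qed
  finally show ?thesis unfolding Bmeas P_def A_def A1_def I_def .
qed



lemma frac_mono_aux:
  fixes a b c d :: real
  assumes "b > 0" "d > 0" "a * d \<le> c * b"
  shows "a / b \<le> c / d"
  using assms by (simp add: field_simps)

theorem mainTheorem8:
  fixes F :: "('x \<times> bool \<times> bool) measure"
    and r :: "'x \<Rightarrow> real"
    and Rset :: "real set"
    and n m :: nat
  assumes F_prob: "prob_space F"
    and R_meas: "(\<lambda>\<omega>. r (fst \<omega>)) \<in> borel_measurable F"
    and Y_meas: "{\<omega> \<in> space F. snd (snd \<omega>)} \<in> sets F"
    and R_fin: "finite Rset"
    and R_unit: "Rset \<subseteq> {0..1}"
    and r_into: "\<forall>x. r x \<in> Rset"
    and Y0_pos: "measure F {\<omega> \<in> space F. \<not> snd (snd \<omega>)} > 0"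
    and Y1_pos: "measure F {\<omega> \<in> space F. snd (snd \<omega>)} > 0"
    and denom_pos: "\<forall>\<rho>\<in>Rset. cond_score_prob F r \<rho> False > 0"
    and MLRP: "\<forall>\<rho>\<in>Rset. \<forall>\<rho>'\<in>Rset. \<rho> > \<rho>' \<longrightarrow>
                 cond_score_prob F r \<rho> True / cond_score_prob F r \<rho> False
                 \<ge> cond_score_prob F r \<rho>' True / cond_score_prob F r \<rho>' False"
    and m_ge: "1 \<le> m" and m_le: "m \<le> n"
  shows "\<forall>\<epsilon> \<epsilon>'. 0 \<le> \<epsilon> \<and> \<epsilon> \<le> \<epsilon>' \<longrightarrow> accuracy F r n m \<epsilon> \<le> accuracy F r n m \<epsilon>'"
proof -
  interpret F: prob_space F by (rule F_prob)
  define I where "I = indiv n"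
  have finI: "finite I" by (simp add: I_def indiv_def)
  define A where "A c = {x \<in> space F. r (fst x) = c}" for c
  define A1 where "A1 c = {x \<in> space F. r (fst x) = c \<and> snd (snd x)}" for c
  define A0 where "A0 c = {x \<in> space F. r (fst x) = c \<and> \<not> snd (snd x)}" for c
  define q where "q c = measure F (A c)" for c
  define q1 where "q1 c = measure F (A1 c)" for c
  define q0 where "q0 c = measure F (A0 c)" for c
  define P1 where "P1 = measure F {\<omega> \<in> space F. snd (snd \<omega>)}"
  define P0 where "P0 = measure F {\<omega> \<in> space F. \<not> snd (snd \<omega>)}"
  have P1p: "P1 > 0" and P0p: "P0 > 0" using Y1_pos Y0_pos by (simp_all add: P1_def P0_def)
  have Asets: "A c \<in> sets F" for c
  proof -
    have "A c = (\<lambda>\<omega>. r (fst \<omega>)) -` {c} \<inter> space F" unfolding A_def by auto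
    then show ?thesis using measurable_sets[OF R_meas, of "{c}"] by simp
  qed
  have A1sets: "A1 c \<in> sets F" for c
  proof -
    have "A1 c = A c \<inter> {\<omega> \<in> space F. snd (snd \<omega>)}" unfolding A_def A1_def by auto
    then show ?thesis using Asets Y_meas by auto
  qed
  have A0sets: "A0 c \<in> sets F" for c
  proof -
    have "A0 c = A c - A1 c" unfolding A_def A1_def A0_def by auto
    then show ?thesis using Asets A1sets by auto
  qed
  have qsplit: "q c = q1 c + q0 c" for c
  proof -
    have "A c = A1 c \<union> A0 c" "A1 c \<inter> A0 c = {}" unfolding A_def A1_def A0_def by auto
    then show ?thesis unfolding q_def q1_def q0_def using F.finite_measure_Union[OF A1sets A0sets] by simp
  qed
  have cT: "cond_score_prob F r c True = q1 c / P1" for c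
    unfolding cond_score_prob_def q1_def A1_def P1_def by simp
  have cF: "cond_score_prob F r c False = q0 c / P0" for c
    unfolding cond_score_prob_def q0_def A0_def P0_def by simp
  have q0p: "q0 c > 0" if "c \<in> Rset" for c
    using denom_pos that P0p unfolding cF by (auto simp: zero_less_divide_iff)
  have q1nn: "q1 c \<ge> 0" for c unfolding q1_def by simp
  have qp: "q c > 0" if "c \<in> Rset" for c using q0p[OF that] q1nn[of c] qsplit[of c] by simp
  have cross: "q1 c' * q0 c \<le> q1 c * q0 c'" if c: "c \<in> Rset" "c' \<in> Rset" "c' < c" for c c'
  proof -
    have h: "(q1 c' / P1) / (q0 c' / P0) \<le> (q1 c / P1) / (q0 c / P0)"
      using MLRP c unfolding cT cF by blast
    have e: "(x / P1) / (y / P0) = (x / y) * (P0 / P1)" for x y by simp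
    have h': "(q1 c' / q0 c') * (P0 / P1) \<le> (q1 c / q0 c) * (P0 / P1)"
      using h by (simp only: e)
    have h2: "q1 c' / q0 c' \<le> q1 c / q0 c"
      using mult_right_le_imp_le[OF h'] P0p P1p by simp
    have "q1 c' / q0 c' * (q0 c * q0 c') \<le> q1 c / q0 c * (q0 c * q0 c')"
    proof -
      have pos: "q0 c * q0 c' \<ge> 0" using q0p[OF c(1)] q0p[OF c(2)] by simp
      show ?thesis by (rule mult_right_mono[OF h2 pos])
    qed
    moreover have "q1 c' / q0 c' * (q0 c * q0 c') = q1 c' * q0 c" using q0p[OF c(2)] by (simp add: field_simps)
    moreover have "q1 c / q0 c * (q0 c * q0 c') = q1 c * q0 c'" using q0p[OF c(1)] by (simp add: field_simps)
    ultimately show ?thesis by simp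
  qed
  define p where "p c = q1 c / q c" for c
  have pmono1: "p c' \<le> p c" if c: "c \<in> Rset" "c' \<in> Rset" "c' < c" for c c'
  proof -
    have "q1 c' * q c \<le> q1 c * q c'"
      using cross[OF c] unfolding qsplit by (simp add: algebra_simps)
    then show ?thesis unfolding p_def using qp c by (intro frac_mono_aux) auto
  qed
  have pmono: "(p c - p c') * (c - c') \<ge> 0" if c: "c \<in> Rset" "c' \<in> Rset" for c c'
  proof (cases c' c rule: linorder_cases)
    case less then show ?thesis using pmono1[OF c less] by simp
  next
    case equal then show ?thesis by simp
  next
    case greater then show ?thesis using pmono1[OF c(2) c(1) greater] by (simp add: mult_nonpos_nonpos)
  qed
  define P where "P = PiE I (\<lambda>_. Rset)"
  define Wt where "Wt \<rho> = (\<Prod>j\<in>I. q (\<rho> j))" for \<rho>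
  define \<Phi> where "\<Phi> \<rho> e = (\<Sum>i\<in>I. sel_prob e n m \<rho> i * p (\<rho> i))" for \<rho> e
  have acc: "accuracy F r n m e = 1 / real m * (\<Sum>\<rho>\<in>P. Wt \<rho> * \<Phi> \<rho> e)" for e
  proof -
    have j: "joint_sel_qual F r n m e i = (\<Sum>\<rho>\<in>P. sel_prob e n m \<rho> i * (p (\<rho> i) * Wt \<rho>))"
      if i: "i \<in> I" for i
    proof -
      have "joint_sel_qual F r n m e i = (\<Sum>\<rho>\<in>P. sel_prob e n m \<rho> i * (q1 (\<rho> i) * (\<Prod>j\<in>I - {i}. q (\<rho> j))))"
        using joint_formula[OF F_prob R_meas Y_meas R_fin r_into, of i n m e] i
        unfolding P_def I_def q1_def q_def A1_def A_def by simp
      also have "\<dots> = (\<Sum>\<rho>\<in>P. sel_prob e n m \<rho> i * (p (\<rho> i) * Wt \<rho>))"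
      proof (intro sum.cong refl)
        fix \<rho> assume \<rho>: "\<rho> \<in> P"
        have \<rho>i: "\<rho> i \<in> Rset" using \<rho> i unfolding P_def by blast
        have "Wt \<rho> = q (\<rho> i) * (\<Prod>j\<in>I - {i}. q (\<rho> j))" unfolding Wt_def using i finI by (simp add: prod.remove)
        moreover have "p (\<rho> i) * q (\<rho> i) = q1 (\<rho> i)" unfolding p_def using qp[OF \<rho>i] by simp
        ultimately have "p (\<rho> i) * Wt \<rho> = q1 (\<rho> i) * (\<Prod>j\<in>I - {i}. q (\<rho> j))" by (simp add: mult.assoc[symmetric])
        then show "sel_prob e n m \<rho> i * (q1 (\<rho> i) * (\<Prod>j\<in>I - {i}. q (\<rho> j))) = sel_prob e n m \<rho> i * (p (\<rho> i) * Wt \<rho>)"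
          by simp
      qed
      finally show ?thesis .
    qed
    have "(\<Sum>i\<in>I. joint_sel_qual F r n m e i) = (\<Sum>i\<in>I. \<Sum>\<rho>\<in>P. sel_prob e n m \<rho> i * (p (\<rho> i) * Wt \<rho>))"
      using j by simp
    also have "\<dots> = (\<Sum>\<rho>\<in>P. \<Sum>i\<in>I. sel_prob e n m \<rho> i * (p (\<rho> i) * Wt \<rho>))" by (rule sum.swap)
    also have "\<dots> = (\<Sum>\<rho>\<in>P. Wt \<rho> * \<Phi> \<rho> e)"
      unfolding \<Phi>_def sum_distrib_left by (intro sum.cong refl) (simp add: mult_ac)
    finally show ?thesis unfolding accuracy_def I_def by simp
  qed
  show ?thesis
  proof (intro allI impI)
    fix \<epsilon> \<epsilon>' :: real assume h: "0 \<le> \<epsilon> \<and> \<epsilon> \<le> \<epsilon>'"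
    have "(\<Sum>\<rho>\<in>P. Wt \<rho> * \<Phi> \<rho> \<epsilon>) \<le> (\<Sum>\<rho>\<in>P. Wt \<rho> * \<Phi> \<rho> \<epsilon>')"
    proof (intro sum_mono mult_left_mono)
      fix \<rho> assume \<rho>: "\<rho> \<in> P"
      show "Wt \<rho> \<ge> 0" unfolding Wt_def q_def by (simp add: prod_nonneg)
      have com: "\<forall>i\<in>indiv n. \<forall>j\<in>indiv n. (p (\<rho> i) - p (\<rho> j)) * (\<rho> i - \<rho> j) \<ge> 0"
        using \<rho> pmono unfolding P_def I_def by blast
      show "\<Phi> \<rho> \<epsilon> \<le> \<Phi> \<rho> \<epsilon>'" unfolding \<Phi>_def I_def
        by (rule mono_core[OF com m_le]) (use h in simp)
    qed
    then show "accuracy F r n m \<epsilon> \<le> accuracy F r n m \<epsilon>'" unfolding acc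
      by (intro mult_left_mono) simp_all
  qed
qed


end
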